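(* Let $f\in\mathbb C[U]$ be a polynomial in one variable such that $\mathcal L(f^m)=0$ for all integers $m\ge1$. Then $f=0$.
   Context: $\mathcal L:\mathbb C[U]\to\mathbb C$ is the $\mathbb C$-linear map defined by $\mathcal L(U^{\ell})=\ell!$ for all $\ell\ge0$. *)

theory Defs
  imports "HOL-Computational_Algebra.Polynomial" Complex_Main
begin

definition L_functional :: "complex poly \<Rightarrow> complex" where
  "L_functional p = (\<Sum>i\<le>degree p. coeff p i * of_nat (fact i))"

end

theory Submission
  imports Defs "HOL-Analysis.Analysis" "HOL-Real_Asymp.Real_Asymp"
begin

lemma fact_split: "k \<le> n \<Longrightarrow> (fact n::real) = fact (n-k) * (\<Prod>i<k. real (n - i))"
proof (induction k)
  case 0 then show ?case by simp
next
  case (Suc k)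
  then have IH: "(fact n::real) = fact (n-k) * (\<Prod>i<k. real (n - i))" by simp
  have "(fact (n-k)::real) = real (n-k) * fact (n-k-1)"
    using Suc.prems by (intro fact_reduce) simp
  then show ?case using IH by (simp add: lessThan_Suc mult_ac)
qed

lemma w_lim:
  fixes d j k :: nat assumes dpos: "d > 0" and jk: "j \<le> k"
  shows "((\<lambda>m. real (m choose j) * fact (d*m-k) / fact (d*m)) \<longlongrightarrow>
           (if j = k then 1/(fact k * real d ^ k) else 0)) sequentially"
proof -
  define g where "g i m = (if i < j then real m - real i else 1) / (real d * real m - real i)" for i m
  have ev: "eventually (\<lambda>m. (1/fact j) * (\<Prod>i<k. g i m) =
              real (m choose j) * fact (d*m-k) / fact (d*m)) sequentially"
    using eventually_ge_at_top[of "Suc k"]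
  proof eventually_elim
    case (elim m)
    have mdm: "m \<le> d*m" using dpos by simp
    have km: "k \<le> d*m" using elim mdm by linarith
    have f1: "(fact (d*m)::real) = fact (d*m-k) * (\<Prod>i<k. real (d*m - i))" by (rule fact_split[OF km])
    have f2: "real (m choose j) = (\<Prod>i<j. real m - real i) / fact j"
      using gbinomial_mult_fact'[of "real m" j] binomial_gbinomial[of m j, where 'a=real]
      by (simp add: atLeast0LessThan field_simps)
    have p1: "(\<Prod>i<k. (if i < j then real m - real i else 1)) = (\<Prod>i<j. real m - real i)"
    proof -
      have "(\<Prod>i<k. (if i < j then real m - real i else 1)) = (\<Prod>i\<in>{..<k} \<inter> {..<j}. real m - real i)"
        by (subst prod.inter_restrict) auto
      also have "{..<k} \<inter> {..<j} = {..<j}" using jk by auto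
      finally show ?thesis .
    qed
    have p2: "(\<Prod>i<k. real (d*m - i)) = (\<Prod>i<k. real d * real m - real i)"
      using km by (intro prod.cong) (auto simp: of_nat_diff)
    have p3: "(\<Prod>i<k. g i m) = (\<Prod>i<k. (if i < j then real m - real i else 1)) / (\<Prod>i<k. real d * real m - real i)"
      by (simp add: g_def prod_dividef)
    have nz: "(\<Prod>i<k. real d * real m - real i) \<noteq> 0"
    proof -
      have "\<forall>i\<in>{..<k}. real d * real m - real i \<noteq> 0"
        using km by (auto simp flip: of_nat_mult)
      then show ?thesis by simp
    qed
    show ?case using nz by (simp add: p3 p1 f1 f2 p2 field_simps)
  qed
  have lim: "((\<lambda>m. \<Prod>i<k. g i m) \<longlongrightarrow> (\<Prod>i<k. (if i < j then inverse (real d) else 0))) sequentially"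
  proof (intro tendsto_prod)
    fix i assume "i \<in> {..<k}"
    have d0: "real d > 0" using dpos by simp
    show "((\<lambda>m. g i m) \<longlongrightarrow> (if i < j then inverse (real d) else 0)) sequentially"
    proof (cases "i < j")
      case True
      have "((\<lambda>m::nat. (real m - real i) / (real d * real m - real i)) \<longlongrightarrow> inverse (real d)) at_top"
        using d0 by real_asymp
      then show ?thesis using True by (simp add: g_def)
    next
      case False
      have "((\<lambda>m::nat. 1 / (real d * real m - real i)) \<longlongrightarrow> 0) at_top"
        using d0 by real_asymp
      then show ?thesis using False by (simp add: g_def)
    qed
  qed
  have val: "(1/fact j) * (\<Prod>i<k. (if i < j then inverse (real d) else 0)) =
             (if j = k then 1/(fact k * real d ^ k) else 0)"
  proof (cases "j = k")
    case True then show ?thesis by (simp add: power_inverse field_simps)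
  next
    case False
    then have "j \<in> {..<k}" using jk by auto
    then have "(\<Prod>i<k. (if i < j then inverse (real d) else 0)) = 0"
      by (intro prod_zero) auto
    then show ?thesis using False by simp
  qed
  have "((\<lambda>m. (1/fact j) * (\<Prod>i<k. g i m)) \<longlongrightarrow> (if j = k then 1/(fact k * real d ^ k) else 0)) sequentially"
    using tendsto_mult_left[OF lim, of "1/fact j"] val by simp
  then show ?thesis using ev by (rule Lim_transform_eventually)
qed

theorem theorem4p9:
  fixes f :: "complex poly"
  assumes "\<And>m::nat. m \<ge> 1 \<Longrightarrow> L_functional (f ^ m) = 0"
  shows "f = 0"
proof (rule ccontr)
  assume fne: "f \<noteq> 0"
  define d where "d = degree f"
  define c where "c = lead_coeff f"
  have cne: "c \<noteq> 0" using fne by (simp add: c_def)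
  have dpos: "d > 0"
  proof (rule ccontr)
    assume "\<not> d > 0" then have "d = 0" by simp
    then have "L_functional (f^1) = c" by (simp add: L_functional_def c_def d_def)
    with assms[of 1] cne show False by simp
  qed
  define R where "R = smult (inverse c) (reflect_poly f)"
  have reflR: "reflect_poly f = smult c R" using cne by (simp add: R_def)
  have R0: "coeff R 0 = 1" using cne by (simp add: R_def c_def)
  have degR: "degree R \<le> d"
    unfolding R_def d_def by (meson degree_reflect_poly_le degree_smult_le order_trans)
  define b where "b = coeff R 1"
  define H where "H = R - 1"
  have H0: "coeff H 0 = 0" by (simp add: H_def R0)
  obtain Q where HQ: "H = monom 1 1 * Q"
  proof -
    obtain a Q where "H = pCons a Q" by (cases H rule: pCons_cases)
    with H0 have "H = pCons 0 Q" by simp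
    then show ?thesis using that by (simp add: monom_Suc)
  qed
  have Q0: "coeff Q 0 = b"
  proof -
    have "coeff H 1 = b" by (simp add: H_def b_def)
    then show ?thesis by (simp add: HQ coeff_monom_mult)
  qed
  have Hpow: "coeff (H^j) k = (if k < j then 0 else coeff (Q^j) (k-j))" for j k
    by (simp add: HQ power_mult_distrib monom_power coeff_monom_mult)
  have Rpow: "coeff (R^m) k = (\<Sum>j\<le>k. of_nat (m choose j) * coeff (H^j) k)" for m k
  proof -
    have "R^m = (H + 1)^m" by (simp add: H_def)
    also have "\<dots> = (\<Sum>j\<le>m. of_nat (m choose j) * H^j)" by (simp add: binomial_ring)
    finally have "coeff (R^m) k = (\<Sum>j\<le>m. of_nat (m choose j) * coeff (H^j) k)"
      by (simp add: coeff_sum of_nat_poly)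
    also have "\<dots> = (\<Sum>j\<le>max m k. of_nat (m choose j) * coeff (H^j) k)"
      by (rule sum.mono_neutral_left) auto
    also have "\<dots> = (\<Sum>j\<le>k. of_nat (m choose j) * coeff (H^j) k)"
      by (rule sum.mono_neutral_right) (auto simp: Hpow)
    finally show ?thesis .
  qed
  define B where "B = 1 + (\<Sum>i\<le>d. norm (coeff R i))"
  have B1: "B \<ge> 1" unfolding B_def by (simp add: sum_nonneg)
  have Rb: "norm (coeff R i) \<le> real (d choose i) * B^i" for i
  proof (cases "i \<le> d")
    case False
    then have "coeff R i = 0" using degR by (intro coeff_eq_0) simp
    then show ?thesis using B1 by simp
  next
    case True
    show ?thesis
    proof (cases "i = 0")
      case True then show ?thesis by (simp add: R0)
    next
      case False
      have "norm (coeff R i) \<le> (\<Sum>i\<le>d. norm (coeff R i))"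
        using \<open>i \<le> d\<close> by (intro member_le_sum) auto
      also have "\<dots> \<le> B" by (simp add: B_def)
      also have "B = B^1" by simp
      also have "B^1 \<le> B^i" using B1 False by (intro power_increasing) auto
      also have "B^i \<le> real (d choose i) * B^i"
      proof -
        have "(d choose i) \<ge> 1" using \<open>i \<le> d\<close> by (simp add: Suc_leI zero_less_binomial)
        then show ?thesis using B1 by (simp add: mult_le_cancel_right1)
      qed
      finally show ?thesis .
    qed
  qed
  have Rpb: "norm (coeff (R^m) k) \<le> real (d*m choose k) * B^k" for m k
  proof (induction m arbitrary: k)
    case 0 show ?case by (cases k) auto
  next
    case (Suc m)
    have "coeff (R^Suc m) k = (\<Sum>i\<le>k. coeff R i * coeff (R^m) (k-i))" by (simp add: coeff_mult)
    then have "norm (coeff (R^Suc m) k) \<le> (\<Sum>i\<le>k. norm (coeff R i) * norm (coeff (R^m) (k-i)))"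
      by (simp add: norm_mult sum_norm_le)
    also have "\<dots> \<le> (\<Sum>i\<le>k. (real (d choose i) * B^i) * (real (d*m choose (k-i)) * B^(k-i)))"
      using B1 by (intro sum_mono mult_mono Rb Suc.IH) auto
    also have "\<dots> = (\<Sum>i\<le>k. B^k * real ((d choose i) * (d*m choose (k-i))))"
    proof (intro sum.cong refl)
      fix i assume "i \<in> {..k}"
      then have "B^i * B^(k-i) = B^k" by (simp flip: power_add)
      then show "(real (d choose i) * B^i) * (real (d*m choose (k-i)) * B^(k-i)) =
                 B^k * real ((d choose i) * (d*m choose (k-i)))"
        by (simp add: algebra_simps)
    qed
    also have "\<dots> = B^k * real (\<Sum>i\<le>k. (d choose i) * (d*m choose (k-i)))"
      by (simp add: sum_distrib_left)
    also have "\<dots> = real (d * Suc m choose k) * B^k"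
      by (simp only: vandermonde) (simp add: algebra_simps)
    finally show ?case .
  qed
  define T where "T m k = (if k \<le> d*m then coeff (R^m) k * of_real (fact (d*m-k) / fact (d*m)) else 0)" for m k
  have Tb: "norm (T m k) \<le> B^k / fact k" for m k
  proof (cases "k \<le> d*m")
    case True
    have "norm (T m k) = norm (coeff (R^m) k) * (fact (d*m-k) / fact (d*m))"
      using True by (simp add: T_def norm_mult norm_divide norm_fact)
    also have "\<dots> \<le> (real (d*m choose k) * B^k) * (fact (d*m-k) / fact (d*m))"
      by (intro mult_right_mono Rpb) auto
    also have "\<dots> = B^k / fact k"
      using True by (simp add: binomial_fact field_simps)
    finally show ?thesis .
  next
    case False then show ?thesis using B1 by (simp add: T_def)
  qed
  have L_eq: "L_functional (f^m) = c^m * (\<Sum>k\<le>d*m. coeff (R^m) k * fact (d*m - k))" for m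
  proof -
    have deg: "degree (f^m) = d*m" using fne by (simp add: degree_power_eq d_def)
    have "L_functional (f^m) = (\<Sum>i\<le>d*m. coeff (f^m) i * fact i)" by (simp add: L_functional_def deg)
    also have "\<dots> = (\<Sum>k\<le>d*m. coeff (f^m) (d*m-k) * fact (d*m-k))"
      by (rule sum.reindex_bij_witness[of _ "\<lambda>k. d*m - k" "\<lambda>k. d*m - k"]) auto
    also have "\<dots> = (\<Sum>k\<le>d*m. c^m * (coeff (R^m) k * fact (d*m-k)))"
    proof (intro sum.cong refl)
      fix k assume k: "k \<in> {..d*m}"
      have "coeff (f^m) (d*m-k) = coeff (reflect_poly (f^m)) k" using k by (simp add: coeff_reflect_poly deg)
      also have "\<dots> = coeff (smult c R ^ m) k" by (simp add: reflect_poly_power reflR)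
      also have "\<dots> = c^m * coeff (R^m) k" by (simp add: smult_power)
      finally show "coeff (f^m) (d*m-k) * fact (d*m-k) = c^m * (coeff (R^m) k * fact (d*m-k))"
        by simp
    qed
    also have "\<dots> = c^m * (\<Sum>k\<le>d*m. coeff (R^m) k * fact (d*m - k))"
      by (simp add: sum_distrib_left)
    finally show ?thesis .
  qed
  have S0: "(\<Sum>k\<le>d*m. T m k) = 0" if "m \<ge> 1" for m
  proof -
    have "(\<Sum>k\<le>d*m. T m k) = (\<Sum>k\<le>d*m. coeff (R^m) k * fact (d*m-k) / fact (d*m))"
      by (intro sum.cong refl) (simp add: T_def)
    also have "\<dots> = (\<Sum>k\<le>d*m. coeff (R^m) k * fact (d*m-k)) / fact (d*m)"
      by (simp add: sum_divide_distrib)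
    also have "(\<Sum>k\<le>d*m. coeff (R^m) k * fact (d*m-k)) = L_functional (f^m) / c^m"
      using L_eq cne by simp
    also have "\<dots> = 0" using assms that by simp
    finally show ?thesis by simp
  qed
  have Tsum: "suminf (\<lambda>k. T m k) = 0" if "m \<ge> 1" for m
  proof -
    have "(\<lambda>k. T m k) sums (\<Sum>k\<le>d*m. T m k)"
      by (rule sums_finite) (auto simp: T_def)
    then show ?thesis using S0[OF that] by (simp add: sums_iff)
  qed
  have Tlim: "(\<lambda>m. T m k) \<longlonglongrightarrow> (b / of_nat d)^k /\<^sub>R fact k" for k
  proof -
    have ev: "eventually (\<lambda>m. (\<Sum>j\<le>k. coeff (H^j) k * of_real (real (m choose j) * fact (d*m-k) / fact (d*m))) = T m k) sequentially"
      using eventually_ge_at_top[of k]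
    proof eventually_elim
      case (elim m)
      have "m \<le> d*m" using dpos by simp
      then have "k \<le> d*m" using elim by linarith
      then have "T m k = (\<Sum>j\<le>k. of_nat (m choose j) * coeff (H^j) k) * of_real (fact (d*m-k) / fact (d*m))"
        by (simp add: T_def Rpow)
      also have "\<dots> = (\<Sum>j\<le>k. coeff (H^j) k * of_real (real (m choose j) * fact (d*m-k) / fact (d*m)))"
        unfolding sum_distrib_right by (intro sum.cong refl) simp
      finally show ?case by simp
    qed
    have lim: "(\<lambda>m. \<Sum>j\<le>k. coeff (H^j) k * of_real (real (m choose j) * fact (d*m-k) / fact (d*m)))
       \<longlonglongrightarrow> (\<Sum>j\<le>k. coeff (H^j) k * of_real (if j = k then 1/(fact k * real d ^ k) else 0))"
      by (intro tendsto_sum tendsto_mult tendsto_const tendsto_of_real w_lim dpos) auto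
    have "(\<Sum>j\<le>k. coeff (H^j) k * of_real (if j = k then 1/(fact k * real d ^ k) else 0)) =
          coeff (H^k) k * of_real (1/(fact k * real d ^ k))"
      by (simp add: if_distrib cong: if_cong)
    also have "\<dots> = (b / of_nat d)^k /\<^sub>R fact k"
      by (simp add: Hpow Q0 coeff_0_power scaleR_conv_of_real power_divide field_simps)
    finally have "(\<lambda>m. \<Sum>j\<le>k. coeff (H^j) k * of_real (real (m choose j) * fact (d*m-k) / fact (d*m)))
       \<longlonglongrightarrow> (b / of_nat d)^k /\<^sub>R fact k" using lim by simp
    then show ?thesis using ev by (rule Lim_transform_eventually)
  qed
  have summ: "summable (\<lambda>k. B^k / fact k)"
    using summable_exp_generic[of B] by (simp add: divide_inverse mult_ac)
  have "((\<lambda>n. suminf (\<lambda>k. T n k)) \<longlongrightarrow> suminf (\<lambda>k. (b / of_nat d)^k /\<^sub>R fact k)) sequentially"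
    using tannerys_theorem[where a="\<lambda>k n. T n k" and M="\<lambda>k. B^k / fact k" and F=sequentially,
        OF Tlim _ summ] Tb by (simp add: always_eventually)
  moreover have "suminf (\<lambda>k. (b / of_nat d)^k /\<^sub>R fact k) = exp (b / of_nat d)"
    using exp_converges[of "b / of_nat d"] by (simp add: sums_iff)
  ultimately have "((\<lambda>n. suminf (\<lambda>k. T n k)) \<longlongrightarrow> exp (b / of_nat d)) sequentially" by simp
  moreover have "eventually (\<lambda>n. suminf (\<lambda>k. T n k) = 0) sequentially"
    using eventually_ge_at_top[of 1] by eventually_elim (rule Tsum)
  ultimately have "((\<lambda>n. 0::complex) \<longlongrightarrow> exp (b / of_nat d)) sequentially"
    by (rule Lim_transform_eventually)
  then have "exp (b / of_nat d) = 0"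
    using LIMSEQ_unique tendsto_const by blast
  then show False by simp
qed

end
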